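(* Let $r\ge 3$ and let $\mathcal H=(V,E)$ be an $r$-uniform bi-hypergraph. Suppose $V$ has a partition $V_1,\dots,V_r$ such that each $V_i$ ($i\in[r]$) is independent in $\mathcal H$, $V_r=\{w\}$ for a single vertex $w$, and for every edge $e\in E$ with $w\in e$ there is some $i\in[r-1]$ with $e\cap V_i=\emptyset$. Then $\mathcal H$ is colorable.
   Context: A bi-hypergraph $\mathcal H=(V,E)$ consists of a finite vertex set $V$ and a set $E$ of subsets of $V$, called edges, with no edge contained in another. It is $r$-uniform if every edge has exactly $r$ elements. A set $S\subseteq V$ is independent if no edge of $\mathcal H$ is contained in $S$. A mapping $f:V\to\mathbb N$ is a proper coloring of $\mathcal H$ if $1<|f(e)|<|e|$ for every $e\in E$, where $f(e)=\{f(v):v\in e\}$. $\mathcal H$ is colorable if it has a proper coloring. $[k]=\{1,\dots,k\}$. *)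

theory Defs
  imports Main
begin

definition bi_hypergraph :: "'a set \<Rightarrow> 'a set set \<Rightarrow> bool" where
  "bi_hypergraph V E \<longleftrightarrow> finite V \<and> (\<forall>e\<in>E. e \<subseteq> V) \<and>
     (\<forall>e\<in>E. \<forall>e'\<in>E. e \<subseteq> e' \<longrightarrow> e = e')"

definition uniform :: "nat \<Rightarrow> 'a set set \<Rightarrow> bool" where
  "uniform r E \<longleftrightarrow> (\<forall>e\<in>E. card e = r)"

definition independent :: "'a set set \<Rightarrow> 'a set \<Rightarrow> bool" where
  "independent E S \<longleftrightarrow> (\<forall>e\<in>E. \<not> e \<subseteq> S)"

definition proper_coloring :: "'a set set \<Rightarrow> ('a \<Rightarrow> nat) \<Rightarrow> bool" where
  "proper_coloring E f \<longleftrightarrow> (\<forall>e\<in>E. 1 < card (f ` e) \<and> card (f ` e) < card e)"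

definition colorable :: "'a set \<Rightarrow> 'a set set \<Rightarrow> bool" where
  "colorable V E \<longleftrightarrow> (\<exists>f :: 'a \<Rightarrow> nat. proper_coloring E f)"

definition is_partition :: "'a set \<Rightarrow> nat \<Rightarrow> (nat \<Rightarrow> 'a set) \<Rightarrow> bool" where
  "is_partition V r P \<longleftrightarrow> (\<forall>i\<in>{1..r}. P i \<noteq> {}) \<and>
     (\<forall>i\<in>{1..r}. \<forall>j\<in>{1..r}. i \<noteq> j \<longrightarrow> P i \<inter> P j = {}) \<and>
     (\<Union>i\<in>{1..r}. P i) = V"

end

theory Submission
  imports Defs
begin

theorem mainTheorem7:
  fixes V :: "'a set" and E :: "'a set set" and r :: nat
    and P :: "nat \<Rightarrow> 'a set" and w :: 'a
  assumes "r \<ge> 3"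
    and "bi_hypergraph V E"
    and "uniform r E"
    and "is_partition V r P"
    and "\<forall>i\<in>{1..r}. independent E (P i)"
    and "P r = {w}"
    and "\<forall>e\<in>E. w \<in> e \<longrightarrow> (\<exists>i\<in>{1..r-1}. e \<inter> P i = {})"
  shows "colorable V E"
proof -
  note r = assms(1) and H = assms(2)[unfolded bi_hypergraph_def]
   and U = assms(3)[unfolded uniform_def] and Pt = assms(4)[unfolded is_partition_def]
   and I = assms(5)[unfolded independent_def] and Pr = assms(6) and W = assms(7)
  define f where "f v = (SOME i. i \<in> {1..r} \<and> v \<in> P i)" for v
  have fV: "f v \<in> {1..r} \<and> v \<in> P (f v)" if "v \<in> V" for v
  proof -
    from that Pt obtain i where "i \<in> {1..r}" "v \<in> P i" by blast
    then show ?thesis unfolding f_def by (rule someI[where P="\<lambda>i. i \<in> {1..r} \<and> v \<in> P i", OF conjI])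
  qed
  have fu: "f v = i" if "v \<in> P i" "i \<in> {1..r}" for v i
  proof -
    have "v \<in> V" using that Pt by blast
    from fV[OF this] that Pt show ?thesis by blast
  qed
  have "proper_coloring E f"
    unfolding proper_coloring_def
  proof
    fix e assume e: "e \<in> E"
    have ce: "card e = r" using U e by blast
    have fin: "finite e" using ce r by (metis card.infinite not_numeral_le_zero le_0_eq)
    have eV: "e \<subseteq> V" using H e by blast
    have fe: "f ` e \<subseteq> {1..r}" using fV eV by blast
    have ne: "e \<noteq> {}" using ce r by auto
    have g1: "1 < card (f ` e)"
    proof (rule ccontr)
      assume "\<not> 1 < card (f ` e)"
      then have le: "card (f ` e) \<le> 1" by simp
      obtain x where x: "x \<in> e" using ne by blast
      have "\<forall>y\<in>e. f y = f x"
        using le x fin by (metis card_le_Suc0_iff_eq finite_imageI image_eqI One_nat_def)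
      then have "e \<subseteq> P (f x)" using fV eV by (metis subsetI subsetD)
      moreover have "f x \<in> {1..r}" using fV eV x by blast
      ultimately show False using I e by blast
    qed
    have g2: "card (f ` e) < r"
    proof (cases "w \<in> e")
      case True
      then obtain i where i: "i \<in> {1..r-1}" "e \<inter> P i = {}" using W e by blast
      have "f ` e \<subseteq> {1..r} - {i}"
      proof
        fix c assume "c \<in> f ` e"
        then obtain y where y: "y \<in> e" "c = f y" by blast
        have "y \<in> P c" "c \<in> {1..r}" using fV eV y by auto
        then show "c \<in> {1..r} - {i}" using i y by auto
      qed
      then have "card (f ` e) \<le> card ({1..r} - {i})" by (intro card_mono) auto
      also have "\<dots> = r - 1" using i by (subst card_Diff_singleton) auto
      finally show ?thesis using r by linarith
    next
      case False
      have "f ` e \<subseteq> {1..r-1}"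
      proof
        fix c assume "c \<in> f ` e"
        then obtain y where y: "y \<in> e" "c = f y" by blast
        have "y \<in> P c" "c \<in> {1..r}" using fV eV y by auto
        then have "c \<noteq> r" using Pr False y by auto
        then show "c \<in> {1..r-1}" using \<open>c \<in> {1..r}\<close> by auto
      qed
      then have "card (f ` e) \<le> card {1..r-1}" by (intro card_mono) auto
      then show ?thesis using r by simp
    qed
    show "1 < card (f ` e) \<and> card (f ` e) < card e" using g1 g2 ce by simp
  qed
  then show ?thesis unfolding colorable_def by blast
qed

end
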